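(* Let $p\in(0,1]$, let $X\ne\{0\}$ be a finite-dimensional $p$-Banach space and let $Z\subset B_X$ be a symmetric set with $\mathrm{co}_p(Z)=B_X$. Let $\mathcal B$ be the set of all algebraic bases of $X$ consisting of points of $Z$. Then for every $x\in X$, \[\|x\|=\min\Big\{\Big(\sum_{b\in\mathfrak b}|a_b|^p\Big)^{1/p}:\mathfrak b\in\mathcal B,\ a\in\mathbb R^{\mathfrak b}\text{ with }x=\sum_{b\in\mathfrak b}a_bb\Big\}.\]
   Context: A $p$-Banach space is a complete vector space with a $p$-norm (norm axioms with $\|x+y\|^p\le\|x\|^p+\|y\|^p$ replacing the triangle inequality); $B_X$ is its closed unit ball. A set $A\subset X$ is $p$-convex if $\lambda x+\mu y\in A$ whenever $x,y\in A$ and $\lambda,\mu\ge0$ with $\lambda^p+\mu^p=1$; $\mathrm{co}_p(A)$ is the smallest $p$-convex set containing $A$. $Z$ symmetric means $Z=-Z$. *)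

theory Defs
  imports "HOL-Analysis.Analysis"
begin

definition is_pnorm :: "real \<Rightarrow> ('a::real_vector \<Rightarrow> real) \<Rightarrow> bool" where
  "is_pnorm p N \<longleftrightarrow>
     (\<forall>x. 0 \<le> N x) \<and> (\<forall>x. N x = 0 \<longleftrightarrow> x = 0) \<and>
     (\<forall>c x. N (c *\<^sub>R x) = \<bar>c\<bar> * N x) \<and>
     (\<forall>x y. N (x + y) powr p \<le> N x powr p + N y powr p)"

definition pnorm_complete :: "('a::real_vector \<Rightarrow> real) \<Rightarrow> bool" where
  "pnorm_complete N \<longleftrightarrow>
     (\<forall>f::nat \<Rightarrow> 'a. (\<forall>e>0. \<exists>M. \<forall>m\<ge>M. \<forall>n\<ge>M. N (f m - f n) < e) \<longrightarrow>
        (\<exists>l. (\<lambda>n. N (f n - l)) \<longlonglongrightarrow> 0))"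

definition is_pBanach :: "real \<Rightarrow> ('a::real_vector \<Rightarrow> real) \<Rightarrow> bool" where
  "is_pBanach p N \<longleftrightarrow> is_pnorm p N \<and> pnorm_complete N"

definition unit_ball :: "('a::real_vector \<Rightarrow> real) \<Rightarrow> 'a set" where
  "unit_ball N = {x. N x \<le> 1}"

definition p_convex :: "real \<Rightarrow> 'a::real_vector set \<Rightarrow> bool" where
  "p_convex p A \<longleftrightarrow>
     (\<forall>x\<in>A. \<forall>y\<in>A. \<forall>s t. 0 \<le> s \<and> 0 \<le> t \<and> s powr p + t powr p = 1 \<longrightarrow>
        s *\<^sub>R x + t *\<^sub>R y \<in> A)"

definition co_p :: "real \<Rightarrow> 'a::real_vector set \<Rightarrow> 'a set" where
  "co_p p A = \<Inter>{C. A \<subseteq> C \<and> p_convex p C}"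

definition bases_in :: "'a::real_vector set \<Rightarrow> 'a set set" where
  "bases_in Z = {b. b \<subseteq> Z \<and> independent b \<and> span b = UNIV}"

definition rep_values :: "real \<Rightarrow> 'a::real_vector set \<Rightarrow> 'a \<Rightarrow> real set" where
  "rep_values p Z x =
     {(\<Sum>v\<in>b. \<bar>a v\<bar> powr p) powr (1/p) | b a.
        b \<in> bases_in Z \<and> x = (\<Sum>v\<in>b. a v *\<^sub>R v)}"

end

theory Submission imports Defs begin

lemma young_pt:
  fixes x m p :: real
  assumes "0 \<le> x" "0 < m" "0 < p" "p \<le> 1"
  shows "x powr p * m powr (1 - p) \<le> p * x + (1 - p) * m"
proof (cases "x = 0")
  case True then show ?thesis using assms by simp
next
  case False
  show ?thesis
  proof (cases "p = 1")
    case True then show ?thesis using assms by simp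
  next
    case False
    then show ?thesis using Youngs_inequality_0[of p "1-p" x m] assms \<open>x \<noteq> 0\<close> by simp
  qed
qed

lemma powr_concave_pt:
  fixes x y l p :: real
  assumes "0 \<le> x" "0 \<le> y" "0 \<le> l" "l \<le> 1" "0 < p" "p \<le> 1"
  shows "l * x powr p + (1 - l) * y powr p \<le> (l * x + (1 - l) * y) powr p"
proof -
  define m where "m = l * x + (1 - l) * y"
  have m0: "0 \<le> m" using assms by (simp add: m_def)
  show ?thesis
  proof (cases "m = 0")
    case True
    then have "l * x = 0" "(1 - l) * y = 0" using assms unfolding m_def
      by (smt (verit) mult_nonneg_nonneg)+
    then have h1: "l * x powr p = 0" and h2: "(1 - l) * y powr p = 0" using assms by auto
    have h3: "(l * x + (1 - l) * y) powr p = 0" using True m_def by simp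
    show ?thesis using h1 h2 h3 by linarith
  next
    case False
    then have mp: "0 < m" using m0 by simp
    have "(l * x powr p + (1 - l) * y powr p) * m powr (1 - p)
        = l * (x powr p * m powr (1 - p)) + (1 - l) * (y powr p * m powr (1 - p))"
      by (simp add: algebra_simps)
    also have "\<dots> \<le> l * (p * x + (1 - p) * m) + (1 - l) * (p * y + (1 - p) * m)"
      using young_pt[OF assms(1) mp assms(5,6)] young_pt[OF assms(2) mp assms(5,6)] assms
      by (intro add_mono mult_left_mono) auto
    also have "\<dots> = m" by (simp add: m_def algebra_simps)
    also have "\<dots> = m powr p * m powr (1 - p)" using mp by (simp add: powr_add[symmetric])
    finally have "(l * x powr p + (1 - l) * y powr p) * m powr (1 - p) \<le> m powr p * m powr (1 - p)" .
    then show ?thesis using mp unfolding m_def[symmetric] by (simp add: mult_le_cancel_right)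
  qed
qed

lemma powr_subadd:
  fixes x y p :: real
  assumes "0 \<le> x" "0 \<le> y" "0 < p" "p \<le> 1"
  shows "(x + y) powr p \<le> x powr p + y powr p"
proof (cases "x + y = 0")
  case True then show ?thesis using assms by simp
next
  case False
  then have s: "0 < x + y" using assms by simp
  have h: "z \<le> z powr p" if "0 \<le> z" "z \<le> 1" for z
    using powr_mono'[of p 1 z] that assms by simp
  have "(x + y) powr p * 1 = (x + y) powr p * (x / (x + y) + y / (x + y))"
    using s by (simp add: add_divide_distrib[symmetric])
  also have "\<dots> \<le> (x + y) powr p * ((x / (x + y)) powr p + (y / (x + y)) powr p)"
    using s assms by (intro mult_left_mono add_mono h) auto
  also have "\<dots> = x powr p + y powr p"
    using s assms by (simp add: powr_divide distrib_left)
  finally show ?thesis by simp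
qed

lemma key_pos:
  fixes F :: "'b set" and a u :: "'b \<Rightarrow> real"
  assumes fin: "finite F" and nz: "\<forall>v\<in>F. a v \<noteq> 0" and w: "w \<in> F" "a w * u w < 0"
    and p: "0 < p" "p \<le> 1"
  shows "\<exists>t. \<exists>v0\<in>F. a v0 + t * u v0 = 0 \<and>
           (\<Sum>v\<in>F. \<bar>a v + t * u v\<bar> powr p) \<le> (\<Sum>v\<in>F. \<bar>a v\<bar> powr p)"
proof -
  define c where "c v = sgn (a v) * u v" for v
  define \<alpha> where "\<alpha> v = \<bar>a v\<bar>" for v
  have eq: "\<bar>a v + t * u v\<bar> = \<bar>\<alpha> v + t * c v\<bar>" if "v \<in> F" for v t
  proof (cases "a v > 0")
    case True then show ?thesis by (simp add: \<alpha>_def c_def)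
  next
    case False then have "a v < 0" using nz that by force
    then show ?thesis by (simp add: \<alpha>_def c_def abs_if algebra_simps)
  qed
  have apos: "v \<in> F \<Longrightarrow> 0 < \<alpha> v" for v using nz by (simp add: \<alpha>_def)
  define P where "P = {v\<in>F. c v < 0}"
  have wP: "w \<in> P" using w unfolding P_def c_def
    by (cases "a w > 0") (auto simp: mult_less_0_iff)
  have finP: "finite P" using fin by (simp add: P_def)
  define tp where "tp = Min ((\<lambda>v. \<alpha> v / (- c v)) ` P)"
  have "tp \<in> (\<lambda>v. \<alpha> v / (- c v)) ` P" unfolding tp_def using finP wP by (intro Min_in) auto
  then obtain vp where vp: "vp \<in> P" "tp = \<alpha> vp / (- c vp)" by blast
  have tple: "v \<in> P \<Longrightarrow> tp \<le> \<alpha> v / (- c v)" for v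
    unfolding tp_def using finP by (intro Min_le) auto
  have tppos: "0 < tp" using vp apos unfolding P_def by (auto intro: divide_pos_neg)
  have lowp: "0 \<le> \<alpha> v + t * c v" if "v \<in> F" "0 \<le> t" "t \<le> tp" for v t
  proof (cases "c v < 0")
    case True
    then have "v \<in> P" using that by (simp add: P_def)
    then have "t \<le> \<alpha> v / (- c v)" using tple that by force
    moreover have "0 < - c v" using True by simp
    ultimately have "t * (- c v) \<le> \<alpha> v" using pos_le_divide_eq by blast
    then show ?thesis by simp
  next
    case False then show ?thesis using that apos[of v] by simp
  qed
  have rootp: "a vp + tp * u vp = 0"
  proof -
    have "\<alpha> vp + tp * c vp = 0" using vp unfolding P_def by auto
    then show ?thesis using eq[of vp tp] vp unfolding P_def by simp
  qed
  have vpF: "vp \<in> F" using vp P_def by simp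
  have sumeq: "(\<Sum>v\<in>F. \<bar>a v + t * u v\<bar> powr p) = (\<Sum>v\<in>F. \<bar>\<alpha> v + t * c v\<bar> powr p)" for t
    using eq by (intro sum.cong) auto
  have sum0: "(\<Sum>v\<in>F. \<bar>a v\<bar> powr p) = (\<Sum>v\<in>F. (\<alpha> v) powr p)"
    by (simp add: \<alpha>_def)
  define Q where "Q = {v\<in>F. c v > 0}"
  show ?thesis
  proof (cases "Q = {}")
    case True
    have "(\<Sum>v\<in>F. \<bar>\<alpha> v + tp * c v\<bar> powr p) \<le> (\<Sum>v\<in>F. (\<alpha> v) powr p)"
    proof (intro sum_mono)
      fix v assume v: "v \<in> F"
      then have "c v \<le> 0" using True Q_def by force
      then have "\<alpha> v + tp * c v \<le> \<alpha> v" using tppos by (simp add: mult_nonneg_nonpos)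
      then show "\<bar>\<alpha> v + tp * c v\<bar> powr p \<le> (\<alpha> v) powr p"
        using lowp[OF v, of tp] tppos p by (intro powr_mono2) auto
    qed
    then show ?thesis using rootp vpF sumeq sum0 by metis
  next
    case False
    then obtain wq where wq: "wq \<in> Q" by auto
    have finQ: "finite Q" using fin by (simp add: Q_def)
    define s where "s = Min ((\<lambda>v. \<alpha> v / c v) ` Q)"
    have "s \<in> (\<lambda>v. \<alpha> v / c v) ` Q" unfolding s_def using finQ wq by (intro Min_in) auto
    then obtain vq where vq: "vq \<in> Q" "s = \<alpha> vq / c vq" by blast
    have sle: "v \<in> Q \<Longrightarrow> s \<le> \<alpha> v / c v" for v
      unfolding s_def using finQ by (intro Min_le) auto
    have spos: "0 < s" using vq apos unfolding Q_def by (auto intro: divide_pos_pos)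
    have lowq: "0 \<le> \<alpha> v - s * c v" if "v \<in> F" for v
    proof (cases "c v > 0")
      case True
      then have "v \<in> Q" using that by (simp add: Q_def)
      then have "s \<le> \<alpha> v / c v" using sle by force
      then have "s * c v \<le> \<alpha> v" using True pos_le_divide_eq by blast
      then show ?thesis by simp
    next
      case False then show ?thesis using that apos[of v] spos
        by (smt (verit) mult_nonneg_nonpos)
    qed
    have rootq: "a vq + (- s) * u vq = 0"
    proof -
      have "\<alpha> vq + (- s) * c vq = 0" using vq unfolding Q_def by auto
      then show ?thesis using eq[of vq "- s"] vq unfolding Q_def by simp
    qed
    have vqF: "vq \<in> F" using vq Q_def by simp
    define l where "l = tp / (tp + s)"
    have l01: "0 \<le> l" "l \<le> 1" using tppos spos by (auto simp: l_def)
    have comb: "\<alpha> v = l * (\<alpha> v + (- s) * c v) + (1 - l) * (\<alpha> v + tp * c v)" for v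
    proof -
      have "l * (- s) + (1 - l) * tp = 0"
        using tppos spos by (simp add: l_def field_simps)
      have "l * (\<alpha> v + (- s) * c v) + (1 - l) * (\<alpha> v + tp * c v)
          = \<alpha> v + (l * (- s) + (1 - l) * tp) * c v" by (simp add: algebra_simps)
      then show ?thesis using \<open>l * (- s) + (1 - l) * tp = 0\<close>
        by (metis add.right_neutral mult_zero_left)
    qed
    define G where "G t = (\<Sum>v\<in>F. \<bar>\<alpha> v + t * c v\<bar> powr p)" for t
    have "l * G (- s) + (1 - l) * G tp \<le> (\<Sum>v\<in>F. (\<alpha> v) powr p)"
    proof -
      have "l * G (- s) + (1 - l) * G tp
          = (\<Sum>v\<in>F. l * \<bar>\<alpha> v + (- s) * c v\<bar> powr p + (1 - l) * \<bar>\<alpha> v + tp * c v\<bar> powr p)"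
        by (simp add: G_def sum_distrib_left sum.distrib)
      also have "\<dots> \<le> (\<Sum>v\<in>F. (\<alpha> v) powr p)"
      proof (intro sum_mono)
        fix v assume v: "v \<in> F"
        have n1: "0 \<le> \<alpha> v + (- s) * c v" using lowq[OF v] by simp
        have n2: "0 \<le> \<alpha> v + tp * c v" using lowp[OF v, of tp] tppos by simp
        have "l * (\<alpha> v + (- s) * c v) powr p + (1 - l) * (\<alpha> v + tp * c v) powr p
              \<le> (\<alpha> v) powr p"
          using powr_concave_pt[OF n1 n2 l01 p] comb[of v] by simp
        then show "l * \<bar>\<alpha> v + (- s) * c v\<bar> powr p + (1 - l) * \<bar>\<alpha> v + tp * c v\<bar> powr p
              \<le> (\<alpha> v) powr p" using n1 n2 by simp
      qed
      finally show ?thesis .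
    qed
    then have "min (G (- s)) (G tp) \<le> (\<Sum>v\<in>F. (\<alpha> v) powr p)"
    proof -
      have "l * min (G (- s)) (G tp) + (1 - l) * min (G (- s)) (G tp)
            \<le> l * G (- s) + (1 - l) * G tp"
        using l01 by (intro add_mono mult_left_mono) auto
      then show ?thesis using \<open>l * G (- s) + (1 - l) * G tp \<le> _\<close> by (simp add: algebra_simps)
    qed
    then show ?thesis
    proof (cases "G (- s) \<le> G tp")
      case True
      then show ?thesis using \<open>min _ _ \<le> _\<close> rootq vqF sumeq[of "- s"] sum0 G_def
        by (metis min.absorb1)
    next
      case False
      then show ?thesis using \<open>min _ _ \<le> _\<close> rootp vpF sumeq[of tp] sum0 G_def
        by (metis min.absorb2 nle_le)
    qed
  qed
qed

lemma key:
  fixes F :: "'b set" and a u :: "'b \<Rightarrow> real"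
  assumes fin: "finite F" and nz: "\<forall>v\<in>F. a v \<noteq> 0" and w: "w \<in> F" "u w \<noteq> 0"
    and p: "0 < p" "p \<le> 1"
  shows "\<exists>t. \<exists>v0\<in>F. a v0 + t * u v0 = 0 \<and>
           (\<Sum>v\<in>F. \<bar>a v + t * u v\<bar> powr p) \<le> (\<Sum>v\<in>F. \<bar>a v\<bar> powr p)"
proof (cases "a w * u w < 0")
  case True then show ?thesis using key_pos[of F a w u p, OF fin nz w(1) True p] by blast
next
  case False
  have "a w * u w \<noteq> 0" using nz w by simp
  then have "a w * u w > 0" using False by linarith
  then have "a w * (- u w) < 0" by simp
  from key_pos[of F a w "\<lambda>v. - u v" p, OF fin nz w(1) this p] obtain t v0 where
    "v0 \<in> F" "a v0 + t * - u v0 = 0"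
    "(\<Sum>v\<in>F. \<bar>a v + t * - u v\<bar> powr p) \<le> (\<Sum>v\<in>F. \<bar>a v\<bar> powr p)" by blast
  then have "v0 \<in> F \<and> a v0 + (- t) * u v0 = 0 \<and>
     (\<Sum>v\<in>F. \<bar>a v + (- t) * u v\<bar> powr p) \<le> (\<Sum>v\<in>F. \<bar>a v\<bar> powr p)" by simp
  then show ?thesis by blast
qed

lemma reduce:
  fixes F :: "'a::real_vector set" and a :: "'a \<Rightarrow> real"
  assumes "finite F" "0 < p" "p \<le> 1"
  shows "\<exists>G c. G \<subseteq> F \<and> independent G \<and> (\<Sum>v\<in>G. c v *\<^sub>R v) = (\<Sum>v\<in>F. a v *\<^sub>R v)
           \<and> (\<Sum>v\<in>G. \<bar>c v\<bar> powr p) \<le> (\<Sum>v\<in>F. \<bar>a v\<bar> powr p)"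
  using assms(1)
proof (induction "card F" arbitrary: F a rule: less_induct)
  case less
  note fin = less.prems
  show ?case
  proof (cases "independent F")
    case True then show ?thesis by blast
  next
    case dep: False
    show ?thesis
    proof (cases "\<exists>v\<in>F. a v = 0")
      case True
      then obtain v where v: "v \<in> F" "a v = 0" by blast
      have c: "card (F - {v}) < card F" using fin v by (intro card_Diff1_less)
      obtain G c where G: "G \<subseteq> F - {v}" "independent G"
        "(\<Sum>v\<in>G. c v *\<^sub>R v) = (\<Sum>v\<in>F - {v}. a v *\<^sub>R v)"
        "(\<Sum>v\<in>G. \<bar>c v\<bar> powr p) \<le> (\<Sum>v\<in>F - {v}. \<bar>a v\<bar> powr p)"
        using less.hyps[OF c, of a] fin by blast
      have "(\<Sum>v\<in>F. a v *\<^sub>R v) = (\<Sum>v\<in>F - {v}. a v *\<^sub>R v)"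
        using sum.remove[OF fin v(1), of "\<lambda>v. a v *\<^sub>R v"] v by simp
      moreover have "(\<Sum>v\<in>F. \<bar>a v\<bar> powr p) = (\<Sum>v\<in>F - {v}. \<bar>a v\<bar> powr p)"
        using sum.remove[OF fin v(1), of "\<lambda>v. \<bar>a v\<bar> powr p"] v by simp
      ultimately show ?thesis using G by (intro exI[of _ G] exI[of _ c]) auto
    next
      case False
      then have nz: "\<forall>v\<in>F. a v \<noteq> 0" by blast
      obtain u w where uw: "w \<in> F" "u w \<noteq> 0" "(\<Sum>v\<in>F. u v *\<^sub>R v) = 0"
        using dep real_vector.dependent_finite[OF fin] by blast
      obtain t v0 where tv: "v0 \<in> F" "a v0 + t * u v0 = 0"
        "(\<Sum>v\<in>F. \<bar>a v + t * u v\<bar> powr p) \<le> (\<Sum>v\<in>F. \<bar>a v\<bar> powr p)"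
        using key[of F a w u p, OF fin nz uw(1,2) assms(2,3)] by blast
      define a' where "a' v = a v + t * u v" for v
      have c: "card (F - {v0}) < card F" using fin tv by (intro card_Diff1_less)
      obtain G c where G: "G \<subseteq> F - {v0}" "independent G"
        "(\<Sum>v\<in>G. c v *\<^sub>R v) = (\<Sum>v\<in>F - {v0}. a' v *\<^sub>R v)"
        "(\<Sum>v\<in>G. \<bar>c v\<bar> powr p) \<le> (\<Sum>v\<in>F - {v0}. \<bar>a' v\<bar> powr p)"
        using less.hyps[OF c, of a'] fin by blast
      have "(\<Sum>v\<in>F - {v0}. a' v *\<^sub>R v) = (\<Sum>v\<in>F. a' v *\<^sub>R v)"
        using sum.remove[OF fin tv(1), of "\<lambda>v. a' v *\<^sub>R v"] tv by (simp add: a'_def)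
      also have "\<dots> = (\<Sum>v\<in>F. a v *\<^sub>R v) + t *\<^sub>R (\<Sum>v\<in>F. u v *\<^sub>R v)"
        by (simp add: a'_def scaleR_add_left sum.distrib scaleR_sum_right)
      also have "\<dots> = (\<Sum>v\<in>F. a v *\<^sub>R v)" using uw by simp
      finally have e1: "(\<Sum>v\<in>F - {v0}. a' v *\<^sub>R v) = (\<Sum>v\<in>F. a v *\<^sub>R v)" .
      have "(\<Sum>v\<in>F - {v0}. \<bar>a' v\<bar> powr p) = (\<Sum>v\<in>F. \<bar>a' v\<bar> powr p)"
        using sum.remove[OF fin tv(1), of "\<lambda>v. \<bar>a' v\<bar> powr p"] tv by (simp add: a'_def)
      with tv(3) have e2: "(\<Sum>v\<in>F - {v0}. \<bar>a' v\<bar> powr p) \<le> (\<Sum>v\<in>F. \<bar>a v\<bar> powr p)"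
        by (simp add: a'_def)
      show ?thesis using G e1 e2 by (intro exI[of _ G] exI[of _ c]) auto
    qed
  qed
qed

lemma psum_le:
  fixes N :: "'a::real_vector \<Rightarrow> real" and f :: "'b \<Rightarrow> 'a"
  assumes N: "is_pnorm p N" and p: "0 < p" and fin: "finite b"
  shows "N (\<Sum>v\<in>b. f v) powr p \<le> (\<Sum>v\<in>b. N (f v) powr p)"
  using fin
proof (induction b rule: finite_induct)
  case empty
  have "N 0 = 0" using N unfolding is_pnorm_def by blast
  then show ?case by simp
next
  case (insert x F)
  have "N (\<Sum>v\<in>insert x F. f v) powr p = N (f x + (\<Sum>v\<in>F. f v)) powr p"
    using insert by simp
  also have "\<dots> \<le> N (f x) powr p + N (\<Sum>v\<in>F. f v) powr p"
    using N unfolding is_pnorm_def by blast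
  also have "\<dots> \<le> N (f x) powr p + (\<Sum>v\<in>F. N (f v) powr p)"
    using insert by simp
  also have "\<dots> = (\<Sum>v\<in>insert x F. N (f v) powr p)" using insert by simp
  finally show ?case .
qed

lemma lower:
  fixes N :: "'a::real_vector \<Rightarrow> real"
  assumes N: "is_pnorm p N" and p: "0 < p" and fin: "finite b" and le: "\<forall>v\<in>b. N v \<le> 1"
  shows "N (\<Sum>v\<in>b. a v *\<^sub>R v) \<le> (\<Sum>v\<in>b. \<bar>a v\<bar> powr p) powr (1 / p)"
proof -
  have N0: "\<And>x. 0 \<le> N x" and Ns: "\<And>c x. N (c *\<^sub>R x) = \<bar>c\<bar> * N x"
    using N unfolding is_pnorm_def by auto
  have "N (\<Sum>v\<in>b. a v *\<^sub>R v) powr p \<le> (\<Sum>v\<in>b. N (a v *\<^sub>R v) powr p)"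
    by (rule psum_le[OF N p fin])
  also have "\<dots> \<le> (\<Sum>v\<in>b. \<bar>a v\<bar> powr p)"
  proof (intro sum_mono)
    fix v assume v: "v \<in> b"
    have "\<bar>a v\<bar> * N v \<le> \<bar>a v\<bar>" using le v by (simp add: mult_left_le)
    then show "N (a v *\<^sub>R v) powr p \<le> \<bar>a v\<bar> powr p"
      unfolding Ns using p N0[of v] by (intro powr_mono2) auto
  qed
  finally have h: "N (\<Sum>v\<in>b. a v *\<^sub>R v) powr p \<le> (\<Sum>v\<in>b. \<bar>a v\<bar> powr p)" .
  have "N (\<Sum>v\<in>b. a v *\<^sub>R v) = (N (\<Sum>v\<in>b. a v *\<^sub>R v) powr p) powr (1 / p)"
    using p N0 by (simp add: powr_powr)
  also have "\<dots> \<le> (\<Sum>v\<in>b. \<bar>a v\<bar> powr p) powr (1 / p)"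
    using h p by (intro powr_mono2) auto
  finally show ?thesis .
qed

theorem lemma2p4:
  fixes p :: real and N :: "'a::real_vector \<Rightarrow> real" and Z :: "'a set" and x :: 'a
  assumes "0 < p" and "p \<le> 1"
    and "is_pBanach p N"
    and "\<exists>S. finite S \<and> span S = (UNIV :: 'a set)"
    and "(UNIV :: 'a set) \<noteq> {0}"
    and "Z \<subseteq> unit_ball N"
    and "uminus ` Z = Z"
    and "co_p p Z = unit_ball N"
  shows "N x \<in> rep_values p Z x \<and> (\<forall>s\<in>rep_values p Z x. N x \<le> s)"
proof -
  note p = assms(1,2)
  have N: "is_pnorm p N" using assms(3) unfolding is_pBanach_def by blast
  have N0: "\<And>x. 0 \<le> N x" and Nz: "\<And>x. N x = 0 \<longleftrightarrow> x = 0"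
    and Ns: "\<And>c x. N (c *\<^sub>R x) = \<bar>c\<bar> * N x"
    using N unfolding is_pnorm_def by auto
  obtain S :: "'a set" where S: "finite S" "span S = UNIV" using assms(4) by blast
  have indfin: "finite b" if "independent b" for b :: "'a set"
    using real_vector.independent_span_bound[OF S(1) that] S(2) by blast
  have Zle: "\<forall>v\<in>Z. N v \<le> 1" using assms(6) unfolding unit_ball_def by blast
  have lowb: "\<forall>s\<in>rep_values p Z x. N x \<le> s"
  proof
    fix s assume "s \<in> rep_values p Z x"
    then obtain b a where ba: "s = (\<Sum>v\<in>b. \<bar>a v\<bar> powr p) powr (1/p)" "b \<in> bases_in Z"
      "x = (\<Sum>v\<in>b. a v *\<^sub>R v)" unfolding rep_values_def by blast
    have "finite b" "b \<subseteq> Z" using ba(2) indfin unfolding bases_in_def by auto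
    then show "N x \<le> s" using lower[OF N p(1), of b a] Zle ba by auto
  qed
  define C where "C = {y. \<exists>F a. finite F \<and> F \<subseteq> Z \<and> y = (\<Sum>v\<in>F. a v *\<^sub>R v)
      \<and> (\<Sum>v\<in>F. \<bar>a v\<bar> powr p) \<le> 1}"
  have ZC: "Z \<subseteq> C"
  proof
    fix z assume "z \<in> Z"
    then show "z \<in> C" unfolding C_def
      by (intro CollectI exI[of _ "{z}"] exI[of _ "\<lambda>_. 1"]) auto
  qed
  have pcC: "p_convex p C"
    unfolding p_convex_def
  proof (intro ballI allI impI)
    fix y1 y2 s t assume y1: "y1 \<in> C" and y2: "y2 \<in> C"
      and st: "0 \<le> s \<and> 0 \<le> t \<and> s powr p + t powr p = 1"
    obtain F a where F: "finite F" "F \<subseteq> Z" "y1 = (\<Sum>v\<in>F. a v *\<^sub>R v)"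
      "(\<Sum>v\<in>F. \<bar>a v\<bar> powr p) \<le> 1" using y1 unfolding C_def by blast
    obtain G b where G: "finite G" "G \<subseteq> Z" "y2 = (\<Sum>v\<in>G. b v *\<^sub>R v)"
      "(\<Sum>v\<in>G. \<bar>b v\<bar> powr p) \<le> 1" using y2 unfolding C_def by blast
    define H where "H = F \<union> G"
    define a' where "a' v = (if v \<in> F then a v else 0)" for v
    define b' where "b' v = (if v \<in> G then b v else 0)" for v
    have finH: "finite H" using F G by (simp add: H_def)
    have e1: "(\<Sum>v\<in>H. a' v *\<^sub>R v) = y1"
    proof -
      have "(\<Sum>v\<in>H. a' v *\<^sub>R v) = (\<Sum>v\<in>F. a' v *\<^sub>R v)"
        using finH by (intro sum.mono_neutral_right) (auto simp: H_def a'_def)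
      also have "\<dots> = y1" using F by (simp add: a'_def)
      finally show ?thesis .
    qed
    have e2: "(\<Sum>v\<in>H. b' v *\<^sub>R v) = y2"
    proof -
      have "(\<Sum>v\<in>H. b' v *\<^sub>R v) = (\<Sum>v\<in>G. b' v *\<^sub>R v)"
        using finH by (intro sum.mono_neutral_right) (auto simp: H_def b'_def)
      also have "\<dots> = y2" using G by (simp add: b'_def)
      finally show ?thesis .
    qed
    have f1: "(\<Sum>v\<in>H. \<bar>a' v\<bar> powr p) \<le> 1"
    proof -
      have "(\<Sum>v\<in>H. \<bar>a' v\<bar> powr p) = (\<Sum>v\<in>F. \<bar>a' v\<bar> powr p)"
        using finH by (intro sum.mono_neutral_right) (auto simp: H_def a'_def)
      also have "\<dots> = (\<Sum>v\<in>F. \<bar>a v\<bar> powr p)" by (simp add: a'_def)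
      finally show ?thesis using F by simp
    qed
    have f2: "(\<Sum>v\<in>H. \<bar>b' v\<bar> powr p) \<le> 1"
    proof -
      have "(\<Sum>v\<in>H. \<bar>b' v\<bar> powr p) = (\<Sum>v\<in>G. \<bar>b' v\<bar> powr p)"
        using finH by (intro sum.mono_neutral_right) (auto simp: H_def b'_def)
      also have "\<dots> = (\<Sum>v\<in>G. \<bar>b v\<bar> powr p)" by (simp add: b'_def)
      finally show ?thesis using G by simp
    qed
    define c where "c v = s * a' v + t * b' v" for v
    have "s *\<^sub>R y1 + t *\<^sub>R y2 = (\<Sum>v\<in>H. c v *\<^sub>R v)"
      unfolding e1[symmetric] e2[symmetric] c_def
      by (simp add: scaleR_sum_right scaleR_add_left sum.distrib)
    moreover have "(\<Sum>v\<in>H. \<bar>c v\<bar> powr p) \<le> 1"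
    proof -
      have "(\<Sum>v\<in>H. \<bar>c v\<bar> powr p) \<le> (\<Sum>v\<in>H. s powr p * \<bar>a' v\<bar> powr p + t powr p * \<bar>b' v\<bar> powr p)"
      proof (intro sum_mono)
        fix v
        have "\<bar>c v\<bar> powr p \<le> (\<bar>s * a' v\<bar> + \<bar>t * b' v\<bar>) powr p"
          unfolding c_def using p by (intro powr_mono2 abs_triangle_ineq) auto
        also have "\<dots> \<le> \<bar>s * a' v\<bar> powr p + \<bar>t * b' v\<bar> powr p"
          using p by (intro powr_subadd) auto
        also have "\<dots> = s powr p * \<bar>a' v\<bar> powr p + t powr p * \<bar>b' v\<bar> powr p"
          using st by (simp add: abs_mult powr_mult)
        finally show "\<bar>c v\<bar> powr p \<le> s powr p * \<bar>a' v\<bar> powr p + t powr p * \<bar>b' v\<bar> powr p" .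
      qed
      also have "\<dots> = s powr p * (\<Sum>v\<in>H. \<bar>a' v\<bar> powr p) + t powr p * (\<Sum>v\<in>H. \<bar>b' v\<bar> powr p)"
        by (simp add: sum.distrib sum_distrib_left)
      also have "\<dots> \<le> s powr p * 1 + t powr p * 1"
        using f1 f2 by (intro add_mono mult_left_mono) auto
      also have "\<dots> = 1" using st by simp
      finally show ?thesis .
    qed
    ultimately show "s *\<^sub>R y1 + t *\<^sub>R y2 \<in> C"
      unfolding C_def using finH F(2) G(2) by (auto simp: H_def)
  qed
  have ballC: "unit_ball N \<subseteq> C"
    using assms(8) ZC pcC unfolding co_p_def by blast
  have pcspan: "p_convex p (span Z)"
    unfolding p_convex_def by (auto intro: real_vector.span_add real_vector.span_scale)
  have ballspan: "unit_ball N \<subseteq> span Z"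
    using assms(8) pcspan real_vector.span_superset[of Z] unfolding co_p_def by blast
  have spanZ: "span Z = UNIV"
  proof -
    have "y \<in> span Z" for y
    proof (cases "y = 0")
      case True then show ?thesis by (simp add: real_vector.span_zero)
    next
      case False
      then have np: "0 < N y" using N0[of y] Nz[of y] by simp
      have "N ((1 / N y) *\<^sub>R y) = 1" using np by (simp add: Ns)
      then have "(1 / N y) *\<^sub>R y \<in> span Z" using ballspan unfolding unit_ball_def by auto
      then have "N y *\<^sub>R ((1 / N y) *\<^sub>R y) \<in> span Z" by (rule real_vector.span_scale)
      then show ?thesis using np by simp
    qed
    then show ?thesis by auto
  qed
  have extend: "\<exists>B. G \<subseteq> B \<and> B \<in> bases_in Z" if GZ: "G \<subseteq> Z" and GI: "independent G" for G
  proof -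
    obtain B where B: "G \<subseteq> B" "B \<subseteq> Z" "independent B" "Z \<subseteq> span B"
      using real_vector.maximal_independent_subset_extend[OF GZ GI] by blast
    have "span Z \<subseteq> span B" using B(4) real_vector.span_mono real_vector.span_span by blast
    then have "span B = UNIV" using spanZ by auto
    then show ?thesis using B unfolding bases_in_def by blast
  qed
  have attain: "N x \<in> rep_values p Z x"
  proof (cases "x = 0")
    case True
    obtain B where B: "B \<in> bases_in Z" using extend[of "{}"] real_vector.independent_empty by auto
    define z :: "'a \<Rightarrow> real" where "z = (\<lambda>_. 0)"
    have "N x = (\<Sum>v\<in>B. \<bar>z v\<bar> powr p) powr (1/p)" using True Nz by (simp add: z_def)
    moreover have "x = (\<Sum>v\<in>B. z v *\<^sub>R v)" using True by (simp add: z_def)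
    ultimately show ?thesis using B unfolding rep_values_def by blast
  next
    case False
    define n where "n = N x"
    have np: "0 < n" using N0[of x] Nz[of x] False by (simp add: n_def)
    define y where "y = (1 / n) *\<^sub>R x"
    have "N y = 1" using np by (simp add: y_def Ns n_def)
    then have "y \<in> C" using ballC unfolding unit_ball_def by auto
    then obtain F a where F: "finite F" "F \<subseteq> Z" "y = (\<Sum>v\<in>F. a v *\<^sub>R v)"
      "(\<Sum>v\<in>F. \<bar>a v\<bar> powr p) \<le> 1" unfolding C_def by blast
    obtain G c where G: "G \<subseteq> F" "independent G" "(\<Sum>v\<in>G. c v *\<^sub>R v) = (\<Sum>v\<in>F. a v *\<^sub>R v)"
      "(\<Sum>v\<in>G. \<bar>c v\<bar> powr p) \<le> (\<Sum>v\<in>F. \<bar>a v\<bar> powr p)"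
      using reduce[OF F(1) p] by blast
    obtain B where B: "G \<subseteq> B" "B \<in> bases_in Z" using extend[of G] G F by auto
    have finB: "finite B" "B \<subseteq> Z" using B indfin unfolding bases_in_def by auto
    define d where "d v = n * (if v \<in> G then c v else 0)" for v
    have xB: "x = (\<Sum>v\<in>B. d v *\<^sub>R v)"
    proof -
      have "(\<Sum>v\<in>B. d v *\<^sub>R v) = n *\<^sub>R (\<Sum>v\<in>B. (if v \<in> G then c v else 0) *\<^sub>R v)"
        by (simp add: d_def scaleR_sum_right)
      also have "(\<Sum>v\<in>B. (if v \<in> G then c v else 0) *\<^sub>R v) = (\<Sum>v\<in>G. (if v \<in> G then c v else 0) *\<^sub>R v)"
        using finB B by (intro sum.mono_neutral_right) auto
      also have "\<dots> = y" using G F by simp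
      finally show ?thesis using np by (simp add: y_def)
    qed
    define V where "V = (\<Sum>v\<in>B. \<bar>d v\<bar> powr p) powr (1/p)"
    have "V \<in> rep_values p Z x" unfolding rep_values_def V_def using B xB by blast
    then have le1: "N x \<le> V" using lowb by blast
    have "(\<Sum>v\<in>B. \<bar>d v\<bar> powr p) = n powr p * (\<Sum>v\<in>B. \<bar>if v \<in> G then c v else 0\<bar> powr p)"
      using np by (simp add: d_def abs_mult powr_mult sum_distrib_left)
    also have "(\<Sum>v\<in>B. \<bar>if v \<in> G then c v else 0\<bar> powr p) = (\<Sum>v\<in>G. \<bar>if v \<in> G then c v else 0\<bar> powr p)"
      using finB B by (intro sum.mono_neutral_right) auto
    also have "\<dots> = (\<Sum>v\<in>G. \<bar>c v\<bar> powr p)" by simp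
    finally have "(\<Sum>v\<in>B. \<bar>d v\<bar> powr p) \<le> n powr p * 1"
      using G(4) F(4) np by (metis mult_left_mono order_trans powr_ge_zero)
    then have "V \<le> (n powr p) powr (1/p)" unfolding V_def
      using p by (intro powr_mono2) (auto intro: sum_nonneg)
    also have "\<dots> = n" using np p by (simp add: powr_powr)
    finally have "V \<le> N x" by (simp add: n_def)
    with le1 have "N x = V" by simp
    then show ?thesis using \<open>V \<in> rep_values p Z x\<close> by simp
  qed
  show ?thesis using attain lowb by blast
qed

end
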